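(* For any integers $W\ge6$, $L\ge2$, $d\ge1$ and any $0<\delta\le\frac1{3K}$ with $K=\lfloor(WL)^{2/d}\rfloor$, there exists a ReLU network $\phi:\mathbb{R}\to\mathbb{R}$, $\phi\in\mathcal{NN}(4W+3,4L)$, such that $\phi(x)\in[0,1]$ for all $x\in\mathbb{R}$, $\mathrm{Lip}\,\phi\le\frac{2L}{K^2\delta^2}$, and $$\phi(x)=\tfrac kK\quad\text{if }x\in\left[\tfrac kK,\tfrac{k+1}K-\delta\cdot1_{\{k<K-1\}}\right],\ k=0,1,\dots,K-1.$$
   Context: $\sigma(x)=\max(x,0)$. $\mathcal{NN}(W,L)$: functions $\phi(x)=T_L(\sigma(T_{L-1}(\cdots\sigma(T_0(x))\cdots)))$ with affine maps $T_l$, ReLU applied componentwise, all hidden layer sizes $\le W$ and depth $\le L$. $\mathrm{Lip}\,\phi$ is the Lipschitz constant of $\phi$. *)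

theory Defs
  imports "HOL-Analysis.Analysis"
begin

text \<open>Vectors of dimension n are represented as functions nat => real (only indices < n matter).
  An affine map from dimension n to dimension m is given by a matrix A and a bias b.\<close>

definition affine_map :: "nat \<Rightarrow> nat \<Rightarrow> (nat \<Rightarrow> nat \<Rightarrow> real) \<Rightarrow> (nat \<Rightarrow> real)
    \<Rightarrow> (nat \<Rightarrow> real) \<Rightarrow> (nat \<Rightarrow> real)" where
  "affine_map n m A b x = (\<lambda>i. if i < m then (\<Sum>j<n. A i j * x j) + b i else 0)"

definition relu_vec :: "(nat \<Rightarrow> real) \<Rightarrow> (nat \<Rightarrow> real)" where
  "relu_vec x = (\<lambda>i. max (x i) 0)"

text \<open>Realization: dims = [d_0, d_1, ..., d_{L+1}], layers = [T_0, ..., T_L];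
  phi = T_L o sigma o T_{L-1} o ... o sigma o T_0.\<close>
fun net_eval :: "nat list \<Rightarrow> ((nat \<Rightarrow> nat \<Rightarrow> real) \<times> (nat \<Rightarrow> real)) list
    \<Rightarrow> (nat \<Rightarrow> real) \<Rightarrow> (nat \<Rightarrow> real)" where
  "net_eval (n # m # ds) ((A, b) # Ls) x =
     (if ds = [] then affine_map n m A b x
      else net_eval (m # ds) Ls (relu_vec (affine_map n m A b x)))"
| "net_eval _ _ x = x"

text \<open>NN(W,L) for scalar functions R -> R: all hidden layer sizes \<le> W, depth (number of
  hidden layers) \<le> L.\<close>
definition NN_scalar :: "nat \<Rightarrow> nat \<Rightarrow> (real \<Rightarrow> real) \<Rightarrow> bool" where
  "NN_scalar W L \<phi> \<longleftrightarrow>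
     (\<exists>dims layers.
        length layers \<ge> 1 \<and> length dims = length layers + 1 \<and>
        hd dims = 1 \<and> last dims = 1 \<and>
        length layers - 1 \<le> L \<and>
        (\<forall>i. 0 < i \<and> i < length layers \<longrightarrow> dims ! i \<le> W) \<and>
        (\<forall>t. \<phi> t = net_eval dims layers (\<lambda>i. if i = 0 then t else 0) 0))"

definition K_of :: "nat \<Rightarrow> nat \<Rightarrow> nat \<Rightarrow> nat" where
  "K_of W L d = nat \<lfloor>(real (W * L)) powr (2 / real d)\<rfloor>"

end

theory Submission
  imports Defs
begin

definition clamp01 :: "real \<Rightarrow> real" where "clamp01 z = max 0 (min 1 z)"
definition ramp :: "real \<Rightarrow> real \<Rightarrow> real \<Rightarrow> real" where
  "ramp c w u = clamp01 ((u - c) / w + 1)"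

lemma clamp01_lip: "1-lipschitz_on UNIV clamp01"
  by (rule lipschitz_onI) (auto simp: clamp01_def dist_real_def)

lemma clamp01_bounds: "0 \<le> clamp01 z" "clamp01 z \<le> 1"
  by (auto simp: clamp01_def)

lemma clamp01_id: "0 \<le> z \<Longrightarrow> z \<le> 1 \<Longrightarrow> clamp01 z = z"
  by (auto simp: clamp01_def)

lemma clamp01_nonpos: "z \<le> 0 \<Longrightarrow> clamp01 z = 0"
  by (auto simp: clamp01_def)

lemma clamp01_le: "0 \<le> z \<Longrightarrow> clamp01 z \<le> z"
  by (auto simp: clamp01_def)

lemma relu_diff_clamp: "max z 0 - max (z - 1) 0 = clamp01 z"
  by (auto simp: clamp01_def)

lemma ramp_one: "w > 0 \<Longrightarrow> c \<le> u \<Longrightarrow> ramp c w u = 1"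
  by (auto simp: ramp_def clamp01_def)

lemma ramp_zero: "w > 0 \<Longrightarrow> u \<le> c - w \<Longrightarrow> ramp c w u = 0"
  unfolding ramp_def clamp01_def
proof -
  assume w: "w > 0" and u: "u \<le> c - w"
  have "(u - c) / w \<le> -1" using w u by (simp add: divide_simps)
  then show "max 0 (min 1 ((u - c) / w + 1)) = 0" by simp
qed

lemma ramp_bounds: "0 \<le> ramp c w u" "ramp c w u \<le> 1"
  by (auto simp: ramp_def clamp01_bounds)

lemma ramp_anti: "w > 0 \<Longrightarrow> c' \<le> c \<Longrightarrow> ramp c w u \<le> ramp c' w u"
  unfolding ramp_def clamp01_def
proof -
  assume w: "w > 0" and c: "c' \<le> c"
  have "(u - c) / w \<le> (u - c') / w" using w c by (simp add: divide_right_mono)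
  then show "max 0 (min 1 ((u - c) / w + 1)) \<le> max 0 (min 1 ((u - c') / w + 1))" by simp
qed

lemma ramp_lip: assumes "w > 0" shows "(1/w)-lipschitz_on UNIV (ramp c w)"
proof -
  have L1: "(1/w)-lipschitz_on UNIV (\<lambda>u. (u - c) / w + 1)"
    using assms by (intro lipschitz_onI) (auto simp: dist_real_def diff_divide_distrib[symmetric] abs_divide)
  have L2: "1-lipschitz_on ((\<lambda>u. (u - c) / w + 1) ` UNIV) clamp01"
    by (rule lipschitz_on_subset[OF clamp01_lip]) auto
  have "(1 * (1/w))-lipschitz_on UNIV (\<lambda>u. clamp01 ((u - c) / w + 1))"
    by (rule lipschitz_on_compose2[OF L1 L2])
  then show ?thesis by (simp add: ramp_def[abs_def])
qed

lemma lip_sum_split: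
  fixes f g :: "real \<Rightarrow> real"
  assumes f: "C-lipschitz_on UNIV f" and g: "C-lipschitz_on UNIV g"
    and fc: "\<And>x. x \<ge> m \<Longrightarrow> f x = f m" and gc: "\<And>x. x \<le> m \<Longrightarrow> g x = g m"
  shows "C-lipschitz_on UNIV (\<lambda>x. f x + g x)"
proof (rule lipschitz_on_leI)
  show "0 \<le> C" using lipschitz_on_nonneg[OF f] .
  fix x y :: real assume xy: "x \<le> y"
  have F: "\<bar>f a - f b\<bar> \<le> C * \<bar>a - b\<bar>" for a b
    using lipschitz_onD[OF f, of a b] by (simp add: dist_real_def)
  have G: "\<bar>g a - g b\<bar> \<le> C * \<bar>a - b\<bar>" for a b
    using lipschitz_onD[OF g, of a b] by (simp add: dist_real_def)
  consider "y \<le> m" | "m \<le> x" | "x \<le> m" "m \<le> y" using xy by linarith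
  then show "dist (f x + g x) (f y + g y) \<le> C * dist x y"
  proof cases
    case 1
    have "g x = g m" by (rule gc) (use 1 xy in linarith)
    moreover have "g y = g m" by (rule gc) (use 1 in linarith)
    ultimately have "g x = g y" by simp
    then show ?thesis using F[of x y] by (simp add: dist_real_def)
  next
    case 2
    have "f x = f m" by (rule fc) (use 2 in linarith)
    moreover have "f y = f m" by (rule fc) (use 2 xy in linarith)
    ultimately have "f x = f y" by simp
    then show ?thesis using G[of x y] by (simp add: dist_real_def)
  next
    case 3
    have "f y = f m" by (rule fc) (use 3 in linarith)
    have "g x = g m" by (rule gc) (use 3 in linarith)
    with \<open>f y = f m\<close> have "\<bar>(f x + g x) - (f y + g y)\<bar> = \<bar>(f x - f m) + (g m - g y)\<bar>" by simp
    also have "\<dots> \<le> \<bar>f x - f m\<bar> + \<bar>g m - g y\<bar>" by (rule abs_triangle_ineq)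
    also have "\<dots> \<le> C * \<bar>x - m\<bar> + C * \<bar>m - y\<bar>" using F G add_mono by blast
    also have "\<dots> = C * \<bar>x - y\<bar>" using 3 by (simp add: algebra_simps)
    finally show ?thesis by (simp add: dist_real_def)
  qed
qed

lemma stair_lip:
  fixes c :: "nat \<Rightarrow> real"
  assumes w: "w > 0" and sep: "\<And>i j. i < j \<Longrightarrow> j < n \<Longrightarrow> c i \<le> c j - w"
  shows "(1/w)-lipschitz_on UNIV (\<lambda>u. \<Sum>i<n. ramp (c i) w u)"
  using sep
proof (induction n)
  case 0
  then show ?case using w by (auto intro: lipschitz_onI)
next
  case (Suc n)
  have IH: "(1/w)-lipschitz_on UNIV (\<lambda>u. \<Sum>i<n. ramp (c i) w u)"
    using Suc.prems by (intro Suc.IH) auto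
  have const: "(\<Sum>i<n. ramp (c i) w x) = (\<Sum>i<n. ramp (c i) w (c n - w))" if "x \<ge> c n - w" for x
  proof (rule sum.cong)
    fix i assume "i \<in> {..<n}"
    then have "c i \<le> c n - w" using Suc.prems by auto
    then show "ramp (c i) w x = ramp (c i) w (c n - w)" using that w by (simp add: ramp_one)
  qed simp
  have "(1/w)-lipschitz_on UNIV (\<lambda>u. (\<Sum>i<n. ramp (c i) w u) + ramp (c n) w u)"
  proof (rule lip_sum_split[OF IH ramp_lip[OF w], where m = "c n - w"])
    fix x :: real assume "c n - w \<le> x"
    then show "(\<Sum>i<n. ramp (c i) w x) = (\<Sum>i<n. ramp (c i) w (c n - w))" by (rule const)
  next
    fix x :: real assume "x \<le> c n - w"
    then show "ramp (c n) w x = ramp (c n) w (c n - w)" using w by (simp add: ramp_zero)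
  qed
  then show ?case by simp
qed

lemma sum_ramp_ge:
  assumes w: "w > 0" and J: "J \<le> n" and lo: "\<And>j. j < J \<Longrightarrow> c j \<le> x"
  shows "real J \<le> (\<Sum>j<n. ramp (c j) w x)"
proof -
  have "(\<Sum>j<n. ramp (c j) w x) = (\<Sum>j<J. ramp (c j) w x) + (\<Sum>j\<in>{J..<n}. ramp (c j) w x)"
    using J sum.atLeastLessThan_concat[of 0 J n "\<lambda>j. ramp (c j) w x"] by (simp add: atLeast0LessThan)
  moreover have "(\<Sum>j<J. ramp (c j) w x) = real J"
    using lo w by (simp add: ramp_one)
  moreover have "0 \<le> (\<Sum>j\<in>{J..<n}. ramp (c j) w x)" by (intro sum_nonneg) (simp add: ramp_bounds)
  ultimately show ?thesis by linarith
qed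

lemma sum_ramp_eq:
  assumes w: "w > 0" and J: "J \<le> n" and lo: "\<And>j. j < J \<Longrightarrow> c j \<le> x"
    and hi: "\<And>j. J \<le> j \<Longrightarrow> j < n \<Longrightarrow> x \<le> c j - w"
  shows "(\<Sum>j<n. ramp (c j) w x) = real J"
proof -
  have "(\<Sum>j<n. ramp (c j) w x) = (\<Sum>j<n. if j < J then 1 else 0)"
    using lo hi w by (intro sum.cong) (auto simp: ramp_one ramp_zero)
  also have "\<dots> = real (card {j. j < n \<and> j < J})"
    by (simp add: sum.If_cases Int_def)
  also have "{j. j < n \<and> j < J} = {..<J}" using J by auto
  finally show ?thesis by simp
qed

lemma sum_ramp_eq1:
  assumes w: "w > 0" and J: "J < n" and lo: "\<And>j. j < J \<Longrightarrow> c j \<le> x"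
    and hi: "\<And>j. J < j \<Longrightarrow> j < n \<Longrightarrow> x \<le> c j - w"
  shows "(\<Sum>j<n. ramp (c j) w x) = real J + ramp (c J) w x"
proof -
  have "(\<Sum>j<n. ramp (c j) w x) = (\<Sum>j<n. (if j < J then 1 else 0) + (if j = J then ramp (c J) w x else 0))"
    using lo hi w by (intro sum.cong) (auto simp: ramp_one ramp_zero)
  also have "\<dots> = (\<Sum>j<n. if j < J then 1 else 0) + ramp (c J) w x"
    using J by (simp add: sum.distrib)
  also have "(\<Sum>j<n. if j < J then (1::real) else 0) = real (card {j. j < n \<and> j < J})"
    by (simp add: sum.If_cases Int_def)
  also have "{j. j < n \<and> j < J} = {..<J}" using J by auto
  finally show ?thesis by simp
qed

lemma lip_chain:
  fixes f :: "real \<Rightarrow> real" and p :: "nat \<Rightarrow> real"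
  assumes mono: "\<And>i. p i \<le> p (Suc i)" and C: "C \<ge> 0"
    and blk: "\<And>i. i < n \<Longrightarrow> C-lipschitz_on {p i .. p (Suc i)} f"
  shows "C-lipschitz_on {p 0 .. p n} f"
  using blk
proof (induction n)
  case 0
  then show ?case using C by (simp)
next
  case (Suc n)
  have "C-lipschitz_on {p 0 .. p n} f" using Suc by auto
  moreover have "C-lipschitz_on {p n .. p (Suc n)} f" using Suc by auto
  ultimately have "C-lipschitz_on {p 0 .. p (Suc n)} (\<lambda>x. if x \<le> p n then f x else f x)"
    by (rule lipschitz_on_concat) simp
  then show ?case by simp
qed

lemma lip_concat_same:
  fixes f :: "real \<Rightarrow> real"
  assumes "C-lipschitz_on {a..b} f" "C-lipschitz_on {b..c} f"
  shows "C-lipschitz_on {a..c} f"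
proof -
  have "C-lipschitz_on {a..c} (\<lambda>x. if x \<le> b then f x else f x)"
    by (rule lipschitz_on_concat[OF assms]) simp
  then show ?thesis by simp
qed

locale cfg =
  fixes A B :: nat and \<delta> :: real
  assumes A1: "1 \<le> A" and B1: "1 \<le> B" and dpos: "0 < \<delta>" and dK: "3 * real (A * B) * \<delta> \<le> 1"
begin

definition KK :: real where "KK = real (A * B)"

lemma KK_ge1: "1 \<le> KK"
proof -
  have "1 \<le> A * B" using A1 B1 by (simp add: Suc_le_eq)
  then show ?thesis unfolding KK_def by (metis of_nat_1 of_nat_le_iff)
qed

lemma KK_pos: "0 < KK" using KK_ge1 by simp

lemma divK_le: "a / KK \<le> b \<longleftrightarrow> a \<le> KK * b"
  using KK_pos by (simp add: pos_divide_le_eq mult.commute[of b KK])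

lemma le_divK: "b \<le> a / KK \<longleftrightarrow> KK * b \<le> a"
  using KK_pos by (simp add: pos_le_divide_eq mult.commute[of b KK])

lemma three_delta: "3 * \<delta> \<le> 1 / KK"
  using dK KK_pos by (simp add: KK_def field_simps)

lemma B_over_K: "1 / KK \<le> real B / KK"
  using B1 KK_pos by (simp add: divide_right_mono)

definition cA :: "nat \<Rightarrow> real" where "cA j = real (Suc j) * real B / KK - \<delta>/3"
definition cE :: "nat \<Rightarrow> real" where "cE j = real (Suc j) * real B / KK - 2*\<delta>/3"
definition cL :: "nat \<Rightarrow> real" where "cL j = real (Suc j) * real B / KK"
definition cF :: "nat \<Rightarrow> real" where "cF i = real (Suc i) / KK"

definition aS :: "real \<Rightarrow> real" where "aS x = (\<Sum>j<A-1. ramp (cA j) (\<delta>/3) x)"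
definition eS :: "real \<Rightarrow> real" where "eS x = (\<Sum>j<A-1. ramp (cE j) (\<delta>/3) x)"
definition lS :: "real \<Rightarrow> real" where "lS x = (\<Sum>j<A-1. ramp (cL j) (\<delta>/3) x)"
definition fS :: "real \<Rightarrow> real" where "fS y = (\<Sum>i<B-1. ramp (cF i) \<delta> y)"
definition yv :: "real \<Rightarrow> real" where "yv x = x - real B / KK * aS x"
definition sS :: "real \<Rightarrow> real" where "sS x = eS x - lS x"
definition psi :: "real \<Rightarrow> real" where
  "psi x = x - clamp01 (KK * yv x - fS (yv x) - sS x) / KK"

lemma h_pos: "0 < \<delta>/3" using dpos by simp

lemma fS_nonneg: "0 \<le> fS y"
  unfolding fS_def by (intro sum_nonneg) (simp add: ramp_bounds)

lemma aS_nonneg: "0 \<le> aS y"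
  unfolding aS_def by (intro sum_nonneg) (simp add: ramp_bounds)

lemma sS_nonneg: "0 \<le> sS x"
proof -
  have "lS x \<le> eS x" unfolding lS_def eS_def
    by (intro sum_mono ramp_anti h_pos) (use dpos in \<open>auto simp: cE_def cL_def\<close>)
  then show ?thesis by (simp add: sS_def)
qed

lemma saw_le1:
  assumes y: "y \<le> real B / KK"
  shows "KK * y - fS y \<le> 1"
proof (cases "y \<le> 0")
  case True
  then have "KK * y \<le> 0" using KK_pos by (simp add: mult_nonneg_nonpos)
  then show ?thesis using fS_nonneg[of y] by linarith
next
  case False
  define i0 where "i0 = min (nat \<lfloor>KK * y\<rfloor>) (B - 1)"
  have pos: "0 \<le> KK * y" using False KK_pos by simp
  have fl0: "real_of_int \<lfloor>KK * y\<rfloor> = real (nat \<lfloor>KK * y\<rfloor>)"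
    using pos by simp
  have fl: "real (nat \<lfloor>KK * y\<rfloor>) \<le> KK * y" using fl0 of_int_floor_le[of "KK * y"] by linarith
  have i0le: "real i0 \<le> KK * y"
  proof -
    have "i0 \<le> nat \<lfloor>KK * y\<rfloor>" by (simp add: i0_def)
    then have "real i0 \<le> real (nat \<lfloor>KK * y\<rfloor>)" by (simp only: of_nat_le_iff)
    then show ?thesis using fl by linarith
  qed
  have "real i0 \<le> fS y" unfolding fS_def
  proof (rule sum_ramp_ge[OF dpos])
    show "i0 \<le> B - 1" by (simp add: i0_def)
    fix j assume "j < i0"
    then have "real (Suc j) \<le> real i0" by simp
    then have "real (Suc j) / KK \<le> real i0 / KK" using KK_pos by (simp add: divide_right_mono)
    also have "\<dots> \<le> y" using i0le by (simp only: divK_le)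
    finally show "cF j \<le> y" by (simp add: cF_def)
  qed
  moreover have "KK * y \<le> real i0 + 1"
  proof (cases "nat \<lfloor>KK * y\<rfloor> \<le> B - 1")
    case True
    then have "i0 = nat \<lfloor>KK * y\<rfloor>" by (simp add: i0_def)
    moreover have "KK * y < real_of_int \<lfloor>KK * y\<rfloor> + 1" by linarith
    moreover have "real_of_int \<lfloor>KK * y\<rfloor> = real (nat \<lfloor>KK * y\<rfloor>)"
      using False KK_pos by (simp add: zero_le_mult_iff)
    ultimately show ?thesis by linarith
  next
    case False
    then have "i0 = B - 1" by (simp add: i0_def)
    then have "real i0 + 1 = real B" using B1 by simp
    moreover have "KK * y \<le> real B" using y by (simp only: le_divK)
    ultimately show ?thesis by linarith
  qed
  ultimately show ?thesis by linarith
qed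

lemma psi_range:
  assumes x: "0 \<le> x" "x \<le> 1"
  shows "0 \<le> psi x \<and> psi x \<le> 1"
proof -
  let ?T = "KK * yv x - fS (yv x) - sS x"
  have "0 \<le> clamp01 ?T / KK" using clamp01_bounds(1)[of ?T] KK_pos by simp
  then have up: "psi x \<le> 1" using x by (simp add: psi_def)
  have lo: "0 \<le> psi x"
  proof (cases "?T \<le> 0")
    case True
    then show ?thesis using x by (simp add: psi_def clamp01_nonpos)
  next
    case False
    then have "clamp01 ?T \<le> ?T" by (intro clamp01_le) simp
    then have "clamp01 ?T / KK \<le> ?T / KK" using KK_pos by (simp add: divide_right_mono)
    also have "?T / KK = x - real B / KK * aS x - (fS (yv x) + sS x) / KK"
      using KK_pos by (simp add: yv_def field_simps)
    finally have "psi x \<ge> real B / KK * aS x + (fS (yv x) + sS x) / KK"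
      by (simp add: psi_def)
    moreover have "0 \<le> real B / KK * aS x" using KK_pos aS_nonneg by simp
    moreover have "0 \<le> (fS (yv x) + sS x) / KK" using KK_pos fS_nonneg sS_nonneg by simp
    ultimately show ?thesis by linarith
  qed
  show ?thesis using up lo by simp
qed

lemma plateau:
  assumes k: "k < A * B"
    and x1: "real k / KK \<le> x"
    and x2: "x \<le> (real k + 1) / KK - \<delta> * (if k < A * B - 1 then 1 else 0)"
  shows "psi x = real k / KK"
proof -
  define a where "a = k div B"
  define i where "i = k mod B"
  have kai: "k = a * B + i" by (simp add: a_def i_def)
  have iB: "i < B" using B1 by (simp add: i_def)
  have aA: "a < A" using k B1 by (simp add: a_def less_mult_imp_div_less)
  have rk: "real k = real a * real B + real i" using kai by simp
  have ind_nonneg: "0 \<le> \<delta> * (if k < A * B - 1 then 1 else 0)" using dpos by simp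
  have xup: "x \<le> (real k + 1) / KK" using x2 ind_nonneg by linarith
  have coarse: "(\<Sum>j<A-1. ramp (c j) (\<delta>/3) x) = real a"
    if cdef: "\<And>j. c j = real (Suc j) * real B / KK - off" and off: "0 \<le> off" "off \<le> 2*\<delta>/3" for c off
  proof (rule sum_ramp_eq[OF h_pos])
    show "a \<le> A - 1" using aA by simp
  next
    fix j assume "j < a"
    then have "Suc j * B \<le> a * B" using mult_le_mono1 Suc_leI by blast
    then have "Suc j * B \<le> k" using kai by simp
    then have "real (Suc j * B) \<le> real k" by (simp only: of_nat_le_iff)
    then have "real (Suc j) * real B \<le> real k" by (simp add: algebra_simps)
    then have "real (Suc j) * real B / KK \<le> real k / KK" using KK_pos by (simp add: divide_right_mono)
    then show "c j \<le> x" using cdef[of j] off x1 by linarith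
  next
    fix j assume j: "a \<le> j" "j < A - 1"
    then have "k + 1 < A * B"
    proof -
      have "k + 1 \<le> (a + 1) * B" using kai iB by simp
      also have "\<dots> \<le> (A - 1) * B" using j by (intro mult_le_mono1) simp
      also have "\<dots> < A * B" using A1 B1 by (simp add: diff_mult_distrib)
      finally show ?thesis .
    qed
    then have ind: "k < A * B - 1" by simp
    have "k + 1 \<le> (a + 1) * B" using kai iB by simp
    also have "\<dots> \<le> Suc j * B" using j by simp
    finally have "k + 1 \<le> Suc j * B" .
    then have "real (k + 1) \<le> real (Suc j * B)" by (simp only: of_nat_le_iff)
    then have "real k + 1 \<le> real (Suc j) * real B" by (simp add: algebra_simps)
    then have "(real k + 1) / KK \<le> real (Suc j) * real B / KK" using KK_pos
      by (simp add: divide_right_mono)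
    moreover have "x \<le> (real k + 1) / KK - \<delta>" using x2 ind by (simp only: if_True mult_1_right)
    ultimately show "x \<le> c j - \<delta>/3" using cdef[of j] off by linarith
  qed
  have aSx: "aS x = real a" unfolding aS_def by (rule coarse[of _ "\<delta>/3"]) (use dpos in \<open>auto simp: cA_def\<close>)
  have eSx: "eS x = real a" unfolding eS_def by (rule coarse[of _ "2*\<delta>/3"]) (use dpos in \<open>auto simp: cE_def\<close>)
  have lSx: "lS x = real a" unfolding lS_def by (rule coarse[of _ 0]) (use dpos in \<open>auto simp: cL_def\<close>)
  have sx: "sS x = 0" by (simp add: sS_def eSx lSx)
  define y where "y = yv x"
  have y: "y = x - real a * real B / KK" by (simp add: y_def yv_def aSx)
  have ylo: "real i / KK \<le> y" using x1 rk KK_pos by (simp add: y add_divide_distrib)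
  have yup: "y \<le> (real i + 1) / KK" using xup rk KK_pos by (simp add: y add_divide_distrib)
  have fy: "fS y = real i" unfolding fS_def
  proof (rule sum_ramp_eq[OF dpos])
    show "i \<le> B - 1" using iB by simp
  next
    fix j assume "j < i"
    then have "real (Suc j) / KK \<le> real i / KK" using KK_pos by (simp add: divide_right_mono)
    then show "cF j \<le> y" using ylo by (simp add: cF_def)
  next
    fix j assume j: "i \<le> j" "j < B - 1"
    have "k + 1 < A * B"
    proof -
      have "k + 1 = a * B + (i + 1)" using kai by simp
      also have "\<dots> < a * B + B" using j by simp
      also have "\<dots> = (a + 1) * B" by simp
      also have "\<dots> \<le> A * B" using aA by (intro mult_le_mono1) simp
      finally show ?thesis .
    qed
    then have ind: "k < A * B - 1" by simp
    have "y \<le> (real i + 1) / KK - \<delta>" using x2 ind rk KK_pos by (simp add: y add_divide_distrib)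
    moreover have "(real i + 1) / KK \<le> real (Suc j) / KK" using j KK_pos by (simp add: divide_right_mono)
    ultimately show "y \<le> cF j - \<delta>" by (simp add: cF_def)
  qed
  have T: "KK * y - fS y - sS x = KK * y - real i" by (simp add: fy sx)
  have T0: "0 \<le> KK * y - real i" using ylo by (simp add: divK_le)
  have T1: "KK * y - real i \<le> 1" using yup by (simp add: le_divK)
  have "psi x = x - (KK * y - real i) / KK"
    by (simp add: psi_def y_def[symmetric] T clamp01_id[OF T0 T1])
  also have "(KK * y - real i) / KK = y - real i / KK" using KK_pos by (simp add: diff_divide_distrib)
  also have "x - (y - real i / KK) = real a * real B / KK + real i / KK" by (simp add: y)
  also have "\<dots> = real k / KK" by (simp add: rk add_divide_distrib)
  finally show ?thesis .
qed

end

context cfg begin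

definition Cst :: real where "Cst = 2 + 4 / (KK * \<delta>)"

lemma pB_mono: "p \<le> q \<Longrightarrow> real p * real B / KK \<le> real q * real B / KK"
  using KK_pos by (intro divide_right_mono mult_right_mono) auto

lemma pB_Suc: "real (Suc p) * real B / KK = real p * real B / KK + real B / KK"
  by (simp add: distrib_right add_divide_distrib)

lemma BK3: "3 * \<delta> \<le> real B / KK" using three_delta B_over_K by linarith

lemma fS_lip: "(1/\<delta>)-lipschitz_on UNIV fS"
proof -
  have "(1/\<delta>)-lipschitz_on UNIV (\<lambda>u. \<Sum>i<B-1. ramp (cF i) \<delta> u)"
  proof (rule stair_lip[OF dpos])
    fix i j :: nat assume "i < j"
    then have "real (Suc i) + 1 \<le> real (Suc j)" by simp
    then have "(real (Suc i) + 1) / KK \<le> real (Suc j) / KK" using KK_pos by (simp add: divide_right_mono)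
    then have "cF i + 1 / KK \<le> cF j" by (simp add: cF_def add_divide_distrib)
    then show "cF i \<le> cF j - \<delta>" using three_delta dpos by linarith
  qed
  then show ?thesis by (simp add: fS_def[abs_def])
qed

lemma form_lip:
  assumes r: "Cr-lipschitz_on UNIV r" and Cr: "Cr \<le> 3/\<delta>"
  shows "Cst-lipschitz_on UNIV (\<lambda>x. x - clamp01 (KK * (x - c0) - fS (x - c0) - r x) / KK)"
proof -
  have t1: "KK-lipschitz_on UNIV (\<lambda>x. KK * (x - c0))"
    using KK_pos by (intro lipschitz_onI) (auto simp: dist_real_def right_diff_distrib[symmetric] abs_mult)
  have sh: "1-lipschitz_on UNIV (\<lambda>x::real. x - c0)"
    by (intro lipschitz_onI) (auto simp: dist_real_def)
  have t2: "((1/\<delta>) * 1)-lipschitz_on UNIV (\<lambda>x. fS (x - c0))"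
    by (rule lipschitz_on_compose2[OF sh lipschitz_on_subset[OF fS_lip]]) auto
  have t3: "(KK + (1/\<delta>) * 1 + Cr)-lipschitz_on UNIV (\<lambda>x. KK * (x - c0) - fS (x - c0) - r x)"
    by (intro lipschitz_on_diff t1 t2 r)
  have t4: "(1 * (KK + (1/\<delta>) * 1 + Cr))-lipschitz_on UNIV (\<lambda>x. clamp01 (KK * (x - c0) - fS (x - c0) - r x))"
    by (rule lipschitz_on_compose2[OF t3 lipschitz_on_subset[OF clamp01_lip]]) auto
  have t5: "(\<bar>1/KK\<bar> * (1 * (KK + (1/\<delta>) * 1 + Cr)))-lipschitz_on UNIV (\<lambda>x. (1/KK) * clamp01 (KK * (x - c0) - fS (x - c0) - r x))"
    by (rule lipschitz_on_cmult_real[OF t4])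
  have t6: "(1 + \<bar>1/KK\<bar> * (1 * (KK + (1/\<delta>) * 1 + Cr)))-lipschitz_on UNIV (\<lambda>x. x - (1/KK) * clamp01 (KK * (x - c0) - fS (x - c0) - r x))"
    by (rule lipschitz_on_diff[OF lipschitz_on_id t5])
  have le: "1 + \<bar>1/KK\<bar> * (1 * (KK + (1/\<delta>) * 1 + Cr)) \<le> Cst"
  proof -
    have "KK + (1/\<delta>) * 1 + Cr \<le> KK + 4/\<delta>" using Cr by simp
    then have "(1/KK) * (KK + (1/\<delta>) * 1 + Cr) \<le> (1/KK) * (KK + 4/\<delta>)"
      using KK_pos by (intro mult_left_mono) auto
    also have "(1/KK) * (KK + 4/\<delta>) = 1 + 4 / (KK * \<delta>)" using KK_pos dpos by (simp add: field_simps)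
    finally show ?thesis using KK_pos by (simp add: Cst_def)
  qed
  show ?thesis using lipschitz_on_mono[OF t6 subset_refl le] by simp
qed

lemma ramp_h_lip: "(3/\<delta>)-lipschitz_on UNIV (ramp c (\<delta>/3))"
  using ramp_lip[OF h_pos, of c] by simp

lemma blk_mid:
  assumes a: "Suc a < A"
  shows "Cst-lipschitz_on {real a * real B / KK .. real (Suc a) * real B / KK} psi"
proof -
  define lo where "lo = real a * real B / KK"
  define G where "G = real (Suc a) * real B / KK"
  have G_lo: "G = lo + real B / KK" unfolding lo_def G_def by (rule pB_Suc)
  have geG: "G \<le> real (Suc j) * real B / KK" if "a \<le> j" for j
    unfolding G_def using that by (intro pB_mono) simp
  have geG2: "G + 3 * \<delta> \<le> real (Suc j) * real B / KK" if "a < j" for j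
  proof -
    have "real (Suc (Suc a)) * real B / KK \<le> real (Suc j) * real B / KK" using that by (intro pB_mono) simp
    then show ?thesis using BK3 pB_Suc[of "Suc a"] by (simp add: G_def)
  qed
  have leLo: "real (Suc j) * real B / KK \<le> lo" if "j < a" for j
    unfolding lo_def using that by (intro pB_mono) simp
  have h3: "0 < \<delta>" using dpos .
  have P: "Cst-lipschitz_on {lo .. G - 2*\<delta>/3} psi"
  proof -
    have eq: "psi x = x - clamp01 (KK * (x - lo) - fS (x - lo) - ramp (cE a) (\<delta>/3) x) / KK"
      if x: "lo \<le> x" "x \<le> G - 2*\<delta>/3" for x
    proof -
      have "aS x = real a" unfolding aS_def
      proof (rule sum_ramp_eq[OF h_pos])
        show "a \<le> A - 1" using a by simp
      next
        fix j assume "j < a" then show "cA j \<le> x" using leLo[of j] x h3 by (simp add: cA_def)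
      next
        fix j assume "a \<le> j" "j < A - 1" then show "x \<le> cA j - \<delta>/3" using geG[of j] x by (simp add: cA_def)
      qed
      moreover have "lS x = real a" unfolding lS_def
      proof (rule sum_ramp_eq[OF h_pos])
        show "a \<le> A - 1" using a by simp
      next
        fix j assume "j < a" then show "cL j \<le> x" using leLo[of j] x by (simp add: cL_def)
      next
        fix j assume "a \<le> j" "j < A - 1" then show "x \<le> cL j - \<delta>/3" using geG[of j] x h3 by (simp add: cL_def)
      qed
      moreover have "eS x = real a + ramp (cE a) (\<delta>/3) x" unfolding eS_def
      proof (rule sum_ramp_eq1[OF h_pos])
        show "a < A - 1" using a by simp
      next
        fix j assume "j < a" then show "cE j \<le> x" using leLo[of j] x h3 by (simp add: cE_def)
      next
        fix j assume "a < j" "j < A - 1" then show "x \<le> cE j - \<delta>/3" using geG2[of j] x h3 by (simp add: cE_def)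
      qed
      ultimately have "yv x = x - lo" "sS x = ramp (cE a) (\<delta>/3) x"
        by (simp_all add: yv_def sS_def lo_def)
      then show ?thesis by (simp add: psi_def lo_def)
    qed
    have "Cst-lipschitz_on UNIV (\<lambda>x. x - clamp01 (KK * (x - lo) - fS (x - lo) - ramp (cE a) (\<delta>/3) x) / KK)"
      by (rule form_lip[OF ramp_h_lip]) simp
    then have "Cst-lipschitz_on {lo .. G - 2*\<delta>/3} (\<lambda>x. x - clamp01 (KK * (x - lo) - fS (x - lo) - ramp (cE a) (\<delta>/3) x) / KK)"
      by (rule lipschitz_on_subset) simp
    then show ?thesis by (rule lipschitz_on_transform) (use eq in auto)
  qed
  have Q: "Cst-lipschitz_on {G - 2*\<delta>/3 .. G} psi"
  proof -
    have eq: "psi x = x" if x: "G - 2*\<delta>/3 \<le> x" "x \<le> G" for x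
    proof -
      have "KK * yv x - fS (yv x) - sS x \<le> 0"
      proof (cases "x \<le> G - \<delta>/3")
        case True
        have "eS x = real (Suc a)" unfolding eS_def
        proof (rule sum_ramp_eq[OF h_pos])
          show "Suc a \<le> A - 1" using a by simp
        next
          fix j assume "j < Suc a" then show "cE j \<le> x" using geG[of j] pB_mono[of "Suc j" "Suc a"] x
            by (simp add: cE_def G_def)
        next
          fix j assume "Suc a \<le> j" "j < A - 1" then show "x \<le> cE j - \<delta>/3" using geG2[of j] True h3 by (simp add: cE_def)
        qed
        moreover have "lS x = real a" unfolding lS_def
        proof (rule sum_ramp_eq[OF h_pos])
          show "a \<le> A - 1" using a by simp
        next
          fix j assume "j < a" then show "cL j \<le> x" using leLo[of j] x BK3 G_lo h3 by (simp add: cL_def)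
        next
          fix j assume "a \<le> j" "j < A - 1" then show "x \<le> cL j - \<delta>/3" using geG[of j] True by (simp add: cL_def)
        qed
        ultimately have s1: "sS x = 1" by (simp add: sS_def)
        have "real a \<le> aS x" unfolding aS_def
        proof (rule sum_ramp_ge[OF h_pos])
          show "a \<le> A - 1" using a by simp
        next
          fix j assume "j < a" then show "cA j \<le> x" using leLo[of j] x BK3 G_lo h3 by (simp add: cA_def)
        qed
        then have "real B / KK * real a \<le> real B / KK * aS x" using KK_pos by (intro mult_left_mono) auto
        then have "yv x \<le> real B / KK"
          using x G_lo by (simp add: yv_def lo_def) (simp add: mult.commute)
        then have "KK * yv x - fS (yv x) \<le> 1" by (rule saw_le1)
        then show ?thesis using s1 by simp
      next
        case False
        have "aS x = real (Suc a)" unfolding aS_def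
        proof (rule sum_ramp_eq[OF h_pos])
          show "Suc a \<le> A - 1" using a by simp
        next
          fix j assume "j < Suc a" then show "cA j \<le> x" using pB_mono[of "Suc j" "Suc a"] False
            by (simp add: cA_def G_def)
        next
          fix j assume "Suc a \<le> j" "j < A - 1" then show "x \<le> cA j - \<delta>/3" using geG2[of j] x h3 by (simp add: cA_def)
        qed
        then have "yv x = x - G" by (simp add: yv_def G_def mult.commute)
        then have "yv x \<le> 0" using x by simp
        then have "KK * yv x \<le> 0" using KK_pos by (simp add: mult_nonneg_nonpos)
        then show ?thesis using fS_nonneg[of "yv x"] sS_nonneg[of x] by linarith
      qed
      then show ?thesis by (simp add: psi_def clamp01_nonpos)
    qed
    have "Cst-lipschitz_on {G - 2*\<delta>/3 .. G} (\<lambda>x. x)"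
      by (rule lipschitz_on_mono[OF lipschitz_on_id subset_refl])
         (use KK_pos dpos in \<open>simp add: Cst_def\<close>)
    then show ?thesis by (rule lipschitz_on_transform) (use eq in auto)
  qed
  have "Cst-lipschitz_on {lo .. G} psi" by (rule lip_concat_same[OF P Q])
  then show ?thesis by (simp add: lo_def G_def)
qed

lemma blk_last:
  "Cst-lipschitz_on {real (A - 1) * real B / KK .. real A * real B / KK} psi"
proof -
  define lo where "lo = real (A - 1) * real B / KK"
  have eq: "psi x = x - clamp01 (KK * (x - lo) - fS (x - lo) - (\<lambda>x. 0) x) / KK" if x: "lo \<le> x" for x
  proof -
    have all: "(\<Sum>j<A-1. ramp (c j) (\<delta>/3) x) = real (A - 1)" if "\<And>j. c j \<le> real (Suc j) * real B / KK" for c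
    proof (rule sum_ramp_eq[OF h_pos])
      fix j assume "j < A - 1"
      then show "c j \<le> x" using that[of j] pB_mono[of "Suc j" "A - 1"] x by (simp add: lo_def)
    qed auto
    have "aS x = real (A - 1)" unfolding aS_def by (rule all) (use dpos in \<open>simp add: cA_def\<close>)
    moreover have "eS x = real (A - 1)" unfolding eS_def by (rule all) (use dpos in \<open>simp add: cE_def\<close>)
    moreover have "lS x = real (A - 1)" unfolding lS_def by (rule all) (simp add: cL_def)
    ultimately have "yv x = x - lo" "sS x = 0" by (simp_all add: yv_def sS_def lo_def)
    then show ?thesis by (simp add: psi_def)
  qed
  have "Cst-lipschitz_on UNIV (\<lambda>x. x - clamp01 (KK * (x - lo) - fS (x - lo) - (\<lambda>x. 0) x) / KK)"
    by (rule form_lip[OF lipschitz_on_constant]) (use dpos in simp)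
  then have "Cst-lipschitz_on {lo .. real A * real B / KK} (\<lambda>x. x - clamp01 (KK * (x - lo) - fS (x - lo) - (\<lambda>x. 0) x) / KK)"
    by (rule lipschitz_on_subset) simp
  then have "Cst-lipschitz_on {lo .. real A * real B / KK} psi" by (rule lipschitz_on_transform) (use eq in auto)
  then show ?thesis by (simp add: lo_def)
qed

lemma psi_lip: "Cst-lipschitz_on {0..1} psi"
proof -
  have "Cst-lipschitz_on {(\<lambda>i. real i * real B / KK) 0 .. (\<lambda>i. real i * real B / KK) A} psi"
  proof (rule lip_chain)
    show "\<And>i. real i * real B / KK \<le> real (Suc i) * real B / KK" by (rule pB_mono) simp
    show "0 \<le> Cst" using KK_pos dpos by (simp add: Cst_def)
  next
    fix i assume i: "i < A"
    show "Cst-lipschitz_on {real i * real B / KK .. real (Suc i) * real B / KK} psi"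
    proof (cases "Suc i < A")
      case True then show ?thesis by (rule blk_mid)
    next
      case False
      then have "i = A - 1" "Suc i = A" using i by auto
      then show ?thesis using blk_last by simp
    qed
  qed
  moreover have "real A * real B / KK = 1" using KK_pos A1 B1 by (simp add: KK_def)
  ultimately show ?thesis by simp
qed

end

definition Zf :: "(nat \<Rightarrow> nat \<Rightarrow> nat \<Rightarrow> real) \<Rightarrow> (nat \<Rightarrow> nat \<Rightarrow> real) \<Rightarrow> nat \<Rightarrow> nat \<Rightarrow> (nat \<Rightarrow> real) \<Rightarrow> real" where
  "Zf zc zb l r V = (\<Sum>q<4. zc l r q * V q) + zb l r"

primrec mst :: "nat \<Rightarrow> (nat \<Rightarrow> nat \<Rightarrow> nat \<Rightarrow> real) \<Rightarrow> (nat \<Rightarrow> nat \<Rightarrow> real) \<Rightarrow> (nat \<Rightarrow> nat \<Rightarrow> nat \<Rightarrow> real)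
    \<Rightarrow> real \<Rightarrow> nat \<Rightarrow> nat \<Rightarrow> real" where
  "mst R zc zb cc t 0 = (\<lambda>k. if k = 0 then t else 0)"
| "mst R zc zb cc t (Suc l) = (\<lambda>k. (if l = 0 then 0 else max (mst R zc zb cc t l k) 0)
      + (\<Sum>r<R. cc l r k * clamp01 (Zf zc zb l r (mst R zc zb cc t l))))"

definition hid :: "nat \<Rightarrow> (nat \<Rightarrow> nat \<Rightarrow> nat \<Rightarrow> real) \<Rightarrow> (nat \<Rightarrow> nat \<Rightarrow> real) \<Rightarrow> nat \<Rightarrow> (nat \<Rightarrow> real) \<Rightarrow> nat \<Rightarrow> real" where
  "hid R zc zb l V = (\<lambda>i. if i < 4 then (if l = 0 then 0 else max (V i) 0)
     else if i < 4 + 2 * R then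
       (if even (i - 4) then max (Zf zc zb l ((i - 4) div 2) V) 0
        else max (Zf zc zb l ((i - 4) div 2) V - 1) 0)
     else 0)"

definition rdE :: "nat \<Rightarrow> (nat \<Rightarrow> nat \<Rightarrow> nat \<Rightarrow> real) \<Rightarrow> nat \<Rightarrow> nat \<Rightarrow> nat \<Rightarrow> real" where
  "rdE R cc l q j = (if j = q then 1 else 0) +
     (if 4 \<le> j \<and> j < 4 + 2 * R then
        (if even (j - 4) then cc l ((j - 4) div 2) q else - cc l ((j - 4) div 2) q) else 0)"

definition rd :: "nat \<Rightarrow> (nat \<Rightarrow> nat \<Rightarrow> nat \<Rightarrow> real) \<Rightarrow> nat \<Rightarrow> nat \<Rightarrow> nat \<Rightarrow> real" where
  "rd R cc l q j = (if l = 0 then (if j = q then 1 else 0) else rdE R cc (l - 1) q j)"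

definition lam :: "(nat \<Rightarrow> nat \<Rightarrow> nat \<Rightarrow> real) \<Rightarrow> nat \<Rightarrow> nat \<Rightarrow> nat \<Rightarrow> real" where
  "lam zc l i q = (if i < 4 then (if l = 0 then 0 else if q = i then 1 else 0) else zc l ((i - 4) div 2) q)"

definition bb :: "(nat \<Rightarrow> nat \<Rightarrow> real) \<Rightarrow> nat \<Rightarrow> nat \<Rightarrow> real" where
  "bb zb l i = (if i < 4 then 0 else if even (i - 4) then zb l ((i - 4) div 2) else zb l ((i - 4) div 2) - 1)"

definition lay :: "nat \<Rightarrow> nat \<Rightarrow> (nat \<Rightarrow> nat \<Rightarrow> nat \<Rightarrow> real) \<Rightarrow> (nat \<Rightarrow> nat \<Rightarrow> real) \<Rightarrow> (nat \<Rightarrow> nat \<Rightarrow> nat \<Rightarrow> real)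
   \<Rightarrow> nat \<Rightarrow> (nat \<Rightarrow> nat \<Rightarrow> real) \<times> (nat \<Rightarrow> real)" where
  "lay R D zc zb cc l = (if l < D then ((\<lambda>i j. \<Sum>q<4. lam zc l i q * rd R cc l q j), bb zb l)
      else ((\<lambda>i j. rd R cc D 0 j), (\<lambda>i. 0)))"

definition dimf :: "nat \<Rightarrow> nat \<Rightarrow> nat \<Rightarrow> nat" where
  "dimf R D l = (if l = 0 then 1 else if l \<le> D then 4 + 2 * R else 1)"

lemma sum_add_split: "(\<Sum>j<a + (b::nat). f j) = (\<Sum>j<a. f j) + (\<Sum>j<b. f (a + j))"
  by (induction b) (simp_all add: add.assoc)

lemma sum_pairs: "(\<Sum>j<2 * (R::nat). f j) = (\<Sum>r<R. f (2 * r) + f (2 * r + 1))"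
proof (induction R)
  case 0 then show ?case by simp
next
  case (Suc R)
  have "2 * Suc R = Suc (Suc (2 * R))" by simp
  then have "(\<Sum>j<2 * Suc R. f j) = (\<Sum>j<2 * R. f j) + f (2 * R) + f (2 * R + 1)"
    by simp
  then show ?case using Suc by (simp add: add.assoc)
qed

lemma sum4_delta: "q < 4 \<Longrightarrow> (\<Sum>j<(4::nat). (if j = q then 1 else 0) * (h j :: real)) = h q"
proof -
  assume q: "q < 4"
  have "(\<Sum>j<(4::nat). (if j = q then 1 else 0) * h j) = (\<Sum>j<(4::nat). if j = q then h j else 0)"
    by (rule sum.cong) auto
  also have "\<dots> = h q" using q by (simp add: sum.delta)
  finally show ?thesis .
qed

lemma readout_hid:
  assumes q: "q < 4"
  shows "(\<Sum>j<4 + 2 * R. rdE R cc l q j * hid R zc zb l V j)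
       = (if l = 0 then 0 else max (V q) 0) + (\<Sum>r<R. cc l r q * clamp01 (Zf zc zb l r V))"
proof -
  have s1: "(\<Sum>j<(4::nat). rdE R cc l q j * hid R zc zb l V j)
      = (\<Sum>j<(4::nat). (if j = q then 1 else 0) * hid R zc zb l V j)"
    by (rule sum.cong) (auto simp: rdE_def)
  also have "\<dots> = hid R zc zb l V q" using q by (rule sum4_delta)
  also have "\<dots> = (if l = 0 then 0 else max (V q) 0)" using q by (simp add: hid_def)
  finally have A: "(\<Sum>j<(4::nat). rdE R cc l q j * hid R zc zb l V j) = (if l = 0 then 0 else max (V q) 0)" .
  define G where "G j = rdE R cc l q (4 + j) * hid R zc zb l V (4 + j)" for j
  have "(\<Sum>j<2 * R. G j) = (\<Sum>r<R. G (2 * r) + G (2 * r + 1))" by (rule sum_pairs)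
  also have "\<dots> = (\<Sum>r<R. cc l r q * clamp01 (Zf zc zb l r V))"
  proof (rule sum.cong)
    fix r assume r: "r \<in> {..<R}"
    have e1: "G (2 * r) = cc l r q * max (Zf zc zb l r V) 0"
      using r q by (simp add: G_def rdE_def hid_def)
    have d1: "(4 + (2 * r + 1) - 4) div 2 = r" by presburger
    have d2: "\<not> even (4 + (2 * r + 1) - 4)" by presburger
    have d3: "4 + (2 * r + 1) < 4 + 2 * R" "4 + (2 * r + 1) \<noteq> q" using r q by auto
    have e2: "G (2 * r + 1) = - cc l r q * max (Zf zc zb l r V - 1) 0"
      unfolding G_def rdE_def hid_def using d1 d2 d3 by (simp only: if_False if_True) simp
    show "G (2 * r) + G (2 * r + 1) = cc l r q * clamp01 (Zf zc zb l r V)"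
      unfolding e1 e2 by (simp add: relu_diff_clamp[symmetric] right_diff_distrib)
  qed simp
  finally have B: "(\<Sum>j<2 * R. G j) = (\<Sum>r<R. cc l r q * clamp01 (Zf zc zb l r V))" .
  show ?thesis using A B by (simp add: sum_add_split G_def)
qed

lemma affine_lay:
  assumes V: "\<And>q. q < 4 \<Longrightarrow> (\<Sum>j<n. rd R cc l q j * h j) = V q"
  shows "affine_map n m (\<lambda>i j. \<Sum>q<4. lam zc l i q * rd R cc l q j) (bb zb l) h
       = (\<lambda>i. if i < m then (\<Sum>q<4. lam zc l i q * V q) + bb zb l i else 0)"
proof -
  have "(\<Sum>j<n. (\<Sum>q<4. lam zc l i q * rd R cc l q j) * h j) = (\<Sum>q<4. lam zc l i q * V q)" for i
  proof -
    have "(\<Sum>j<n. (\<Sum>q<4. lam zc l i q * rd R cc l q j) * h j)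
        = (\<Sum>j<n. \<Sum>q<4. lam zc l i q * (rd R cc l q j * h j))"
      by (simp add: sum_distrib_right mult.assoc)
    also have "\<dots> = (\<Sum>q<4. \<Sum>j<n. lam zc l i q * (rd R cc l q j * h j))" by (rule sum.swap)
    also have "\<dots> = (\<Sum>q<4. lam zc l i q * (\<Sum>j<n. rd R cc l q j * h j))" by (simp add: sum_distrib_left)
    also have "\<dots> = (\<Sum>q<4. lam zc l i q * V q)" by (rule sum.cong) (auto simp: V)
    finally show ?thesis .
  qed
  note eq = this
  show ?thesis unfolding affine_map_def by (rule ext) (simp only: eq)
qed

lemma relu_hid:
  "relu_vec (\<lambda>i. if i < 4 + 2 * R then (\<Sum>q<4. lam zc l i q * V q) + bb zb l i else 0) = hid R zc zb l V"
proof
  fix i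
  show "relu_vec (\<lambda>i. if i < 4 + 2 * R then (\<Sum>q<4. lam zc l i q * V q) + bb zb l i else 0) i = hid R zc zb l V i"
  proof (cases "i < 4")
    case True
    have "(\<Sum>q<4. lam zc l i q * V q) = (if l = 0 then 0 else V i)"
    proof (cases "l = 0")
      case True then show ?thesis using \<open>i < 4\<close> by (simp add: lam_def)
    next
      case False
      have "(\<Sum>q<(4::nat). lam zc l i q * V q) = (\<Sum>q<(4::nat). if q = i then V q else 0)"
        using False \<open>i < 4\<close> by (intro sum.cong) (auto simp: lam_def)
      also have "\<dots> = V i" using \<open>i < 4\<close> by (simp add: sum.delta)
      finally show ?thesis using False by simp
    qed
    then show ?thesis using True by (simp add: relu_vec_def hid_def bb_def)
  next
    case False
    then show ?thesis by (auto simp: relu_vec_def hid_def bb_def lam_def Zf_def algebra_simps)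
  qed
qed

lemma net_main:
  assumes D: "1 \<le> D"
  shows "l \<le> D \<Longrightarrow> (\<And>q. q < 4 \<Longrightarrow> (\<Sum>j<dimf R D l. rd R cc l q j * h j) = mst R zc zb cc t l q) \<Longrightarrow>
    net_eval (map (dimf R D) [l..<D+2]) (map (lay R D zc zb cc) [l..<D+1]) h 0 = mst R zc zb cc t D 0"
proof (induction "D - l" arbitrary: l h)
  case 0
  then have l: "l = D" by simp
  have u1: "[D..<D+2] = [D, D+1]" by (simp add: upt_rec)
  have u2: "[D..<D+1] = [D]" by simp
  have "net_eval (map (dimf R D) [l..<D+2]) (map (lay R D zc zb cc) [l..<D+1]) h
      = affine_map (4 + 2 * R) 1 (\<lambda>i j. rd R cc D 0 j) (\<lambda>i. 0) h"
    using D by (simp add: l u1 u2 dimf_def lay_def)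
  then show ?case using 0(3)[of 0] D by (simp add: affine_map_def l dimf_def)
next
  case (Suc n)
  then have lD: "l < D" by simp
  have u1: "[l..<D+2] = l # Suc l # [Suc (Suc l)..<D+2]" using lD by (simp add: upt_rec)
  have u2: "[l..<D+1] = l # [Suc l..<D+1]" using lD by (simp add: upt_rec)
  have ne: "map (dimf R D) [Suc (Suc l)..<D+2] \<noteq> []" using lD by simp
  let ?V = "mst R zc zb cc t l"
  have aff: "affine_map (dimf R D l) (dimf R D (Suc l)) (\<lambda>i j. \<Sum>q<4. lam zc l i q * rd R cc l q j) (bb zb l) h
      = (\<lambda>i. if i < 4 + 2 * R then (\<Sum>q<4. lam zc l i q * ?V q) + bb zb l i else 0)"
  proof -
    have dS: "dimf R D (Suc l) = 4 + 2 * R" using lD by (simp add: dimf_def)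
    have "affine_map (dimf R D l) (dimf R D (Suc l)) (\<lambda>i j. \<Sum>q<4. lam zc l i q * rd R cc l q j) (bb zb l) h
      = (\<lambda>i. if i < dimf R D (Suc l) then (\<Sum>q<4. lam zc l i q * ?V q) + bb zb l i else 0)"
      by (rule affine_lay[OF Suc.prems(2)])
    then show ?thesis by (simp only: dS)
  qed
  have step: "net_eval (map (dimf R D) [l..<D+2]) (map (lay R D zc zb cc) [l..<D+1]) h
     = net_eval (map (dimf R D) [Suc l..<D+2]) (map (lay R D zc zb cc) [Suc l..<D+1]) (hid R zc zb l ?V)"
    using lD ne by (simp add: u1 u2 lay_def aff relu_hid upt_conv_Cons del: upt_Suc)
  have rdh: "(\<Sum>j<dimf R D (Suc l). rd R cc (Suc l) q j * hid R zc zb l ?V j) = mst R zc zb cc t (Suc l) q"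
    if q: "q < 4" for q
    using lD readout_hid[OF q, of R cc l zc zb ?V] by (simp add: dimf_def rd_def)
  have "net_eval (map (dimf R D) [Suc l..<D+2]) (map (lay R D zc zb cc) [Suc l..<D+1]) (hid R zc zb l ?V) 0
     = mst R zc zb cc t D 0"
    by (rule Suc.hyps(1)) (use Suc.hyps(2) lD rdh in auto)
  then show ?case using step by simp
qed

lemma machine_NN:
  assumes D: "1 \<le> D" "D \<le> L'" and R: "4 + 2 * R \<le> W'"
  shows "NN_scalar W' L' (\<lambda>t. mst R zc zb cc t D 0)"
  unfolding NN_scalar_def
proof (intro exI conjI allI impI)
  let ?dims = "map (dimf R D) [0..<D+2]" and ?layers = "map (lay R D zc zb cc) [0..<D+1]"
  show "1 \<le> length ?layers" by simp
  show "length ?dims = length ?layers + 1" by simp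
  show "hd ?dims = 1" by (simp add: upt_rec dimf_def)
  show "last ?dims = 1" by (simp add: last_map dimf_def)
  show "length ?layers - 1 \<le> L'" using D by simp
  fix i assume i: "0 < i \<and> i < length ?layers"
  then have "?dims ! i = dimf R D i" by (simp del: upt_Suc)
  then show "?dims ! i \<le> W'" using R i by (simp add: dimf_def)
next
  fix t
  let ?dims = "map (dimf R D) [0..<D+2]" and ?layers = "map (lay R D zc zb cc) [0..<D+1]"
  show "mst R zc zb cc t D 0 = net_eval ?dims ?layers (\<lambda>i. if i = 0 then t else 0) 0"
  proof (rule net_main[OF D(1), symmetric])
    fix q :: nat assume "q < 4"
    then show "(\<Sum>j<dimf R D 0. rd R cc 0 q j * (if j = 0 then t else 0)) = mst R zc zb cc t 0 q"
      by (auto simp: dimf_def rd_def)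
  qed simp
qed

lemma sum_min_if: "(\<Sum>g<min n (N::nat). f g) = (\<Sum>g<N. if g < n then f g else (0::real))"
proof -
  have "(\<Sum>g<N. if g < n then f g else 0) = sum f {g \<in> {..<N}. g < n}"
    by (rule sum.inter_filter[symmetric]) simp
  also have "{g \<in> {..<N}. g < n} = {..<min n N}" by auto
  finally show ?thesis by simp
qed

lemma sum_chunk: "(\<Sum>g<min n (k + (R::nat)). f g) = (\<Sum>g<min n k. f g) + (\<Sum>r<R. if k + r < n then f (k + r) else (0::real))"
  by (simp add: sum_min_if sum_add_split)

locale cfg2 = cfg +
  fixes R P :: nat
  assumes R1: "1 \<le> R" and P1: "1 \<le> P" and AR: "A - 1 \<le> P * R" and BR: "B - 1 \<le> P * R"
begin

definition ph :: "nat \<Rightarrow> nat" where "ph l = (l - 1) div P"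
definition gi :: "nat \<Rightarrow> nat \<Rightarrow> nat" where "gi l r = ((l - 1) mod P) * R + r"

definition zcS :: "nat \<Rightarrow> nat \<Rightarrow> nat \<Rightarrow> real" where
  "zcS l r q = (if l = 0 then (if r = 0 \<and> q = 0 then 1 else 0)
     else if l \<le> 4 * P then
       (if ph l < 3 then (if q = 0 then 3 / \<delta> else 0)
        else (if q = 0 then 1 / \<delta> else if q = 1 then - (real B / KK) / \<delta> else 0))
     else if l = 4 * P + 1 then (if r = 0 then (if q = 0 then KK else if q = 1 then - real B else -1) else 0)
     else 0)"

definition zbS :: "nat \<Rightarrow> nat \<Rightarrow> real" where
  "zbS l r = (if l = 0 then 0
     else if l \<le> 4 * P then
       (if ph l = 0 then 1 - cA (gi l r) / (\<delta>/3)
        else if ph l = 1 then 1 - cE (gi l r) / (\<delta>/3)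
        else if ph l = 2 then 1 - cL (gi l r) / (\<delta>/3)
        else 1 - cF (gi l r) / \<delta>)
     else 0)"

definition ccS :: "nat \<Rightarrow> nat \<Rightarrow> nat \<Rightarrow> real" where
  "ccS l r k = (if l = 0 then (if r = 0 \<and> k = 0 then 1 else 0)
     else if l \<le> 4 * P then
       (if ph l = 0 then (if gi l r < A - 1 \<and> k = 1 then 1 else 0)
        else if ph l = 1 then (if gi l r < A - 1 \<and> k = 2 then 1 else 0)
        else if ph l = 2 then (if gi l r < A - 1 \<and> k = 2 then -1 else 0)
        else (if gi l r < B - 1 \<and> k = 3 then 1 else 0))
     else if l = 4 * P + 1 then (if r = 0 \<and> k = 0 then - 1 / KK else 0)
     else 0)"

abbreviation M :: "real \<Rightarrow> nat \<Rightarrow> nat \<Rightarrow> real" where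
  "M t \<equiv> mst R zcS zbS ccS t"

lemma l_facts:
  assumes p: "p < 4" and m: "m < P"
  shows "1 + p * P + m \<noteq> 0" "1 + p * P + m \<le> 4 * P" "ph (1 + p * P + m) = p"
    "gi (1 + p * P + m) r = m * R + r"
proof -
  show "1 + p * P + m \<noteq> 0" by simp
  have "p * P + m < (p + 1) * P" using m by simp
  also have "(p + 1) * P \<le> 4 * P" using p by (intro mult_le_mono1) simp
  finally show "1 + p * P + m \<le> 4 * P" by simp
  have "(p * P + m) div P = p" using m by (simp add: add.commute)
  then show "ph (1 + p * P + m) = p" by (simp add: ph_def)
  have "(p * P + m) mod P = m" using m by (simp add: add.commute)
  then show "gi (1 + p * P + m) r = m * R + r" by (simp add: gi_def)
qed

lemma mst_Suc_pos: "l \<noteq> 0 \<Longrightarrow> M t (Suc l) k = max (M t l k) 0 + (\<Sum>r<R. ccS l r k * clamp01 (Zf zcS zbS l r (M t l)))"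
  by simp

lemma phase:
  fixes n :: nat and c :: "nat \<Rightarrow> real" and it :: "nat \<Rightarrow> real" and base :: "nat \<Rightarrow> real"
  assumes p: "p < 4" and n: "n \<le> P * R"
    and init: "\<And>q. q < 4 \<Longrightarrow> M t (1 + p * P) q = base q"
    and cc_eq: "\<And>m r q. m < P \<Longrightarrow> r < R \<Longrightarrow> q < 4 \<Longrightarrow> ccS (1 + p * P + m) r q = (if m * R + r < n then c q else 0)"
    and z_eq: "\<And>m r. m < P \<Longrightarrow> r < R \<Longrightarrow> m * R + r < n \<Longrightarrow> (\<forall>q<4. c q = 0 \<longrightarrow> M t (1 + p * P + m) q = base q)
        \<Longrightarrow> clamp01 (Zf zcS zbS (1 + p * P + m) r (M t (1 + p * P + m))) = it (m * R + r)"
    and nonneg: "\<And>m q. m \<le> P \<Longrightarrow> q < 4 \<Longrightarrow> 0 \<le> base q + c q * (\<Sum>g<min n (m * R). it g)"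
  shows "m \<le> P \<Longrightarrow> q < 4 \<Longrightarrow> M t (1 + p * P + m) q = base q + c q * (\<Sum>g<min n (m * R). it g)"
proof (induction m arbitrary: q)
  case 0
  then show ?case using init by simp
next
  case (Suc m)
  have mP: "m < P" using Suc.prems by simp
  have IH: "\<And>q. q < 4 \<Longrightarrow> M t (1 + p * P + m) q = base q + c q * (\<Sum>g<min n (m * R). it g)"
    using Suc.IH mP by simp
  let ?l = "1 + p * P + m"
  have lnz: "?l \<noteq> 0" by simp
  have "M t (1 + p * P + Suc m) q = M t (Suc ?l) q" by simp
  also have "\<dots> = max (M t ?l q) 0 + (\<Sum>r<R. ccS ?l r q * clamp01 (Zf zcS zbS ?l r (M t ?l)))"
    by (rule mst_Suc_pos[OF lnz])
  also have "max (M t ?l q) 0 = base q + c q * (\<Sum>g<min n (m * R). it g)"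
    using IH[OF Suc.prems(2)] nonneg[of m q] mP Suc.prems(2) by simp
  also have "(\<Sum>r<R. ccS ?l r q * clamp01 (Zf zcS zbS ?l r (M t ?l)))
      = (\<Sum>r<R. if m * R + r < n then c q * it (m * R + r) else 0)"
  proof (rule sum.cong)
    fix r assume r: "r \<in> {..<R}"
    have bq: "\<forall>q<4. c q = 0 \<longrightarrow> M t ?l q = base q" using IH by simp
    show "ccS ?l r q * clamp01 (Zf zcS zbS ?l r (M t ?l)) = (if m * R + r < n then c q * it (m * R + r) else 0)"
      using cc_eq[OF mP _ Suc.prems(2), of r] z_eq[OF mP _ _ bq, of r] r by auto
  qed simp
  also have "base q + c q * (\<Sum>g<min n (m * R). it g) + (\<Sum>r<R. if m * R + r < n then c q * it (m * R + r) else 0)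
      = base q + c q * (\<Sum>g<min n (Suc m * R). it g)"
  proof -
    have "(\<Sum>g<min n (Suc m * R). it g) = (\<Sum>g<min n (m * R). it g) + (\<Sum>r<R. if m * R + r < n then it (m * R + r) else 0)"
      using sum_chunk[where n=n and k="m * R" and R=R and f=it] by (simp add: add.commute)
    moreover have "(\<Sum>r<R. if m * R + r < n then c q * it (m * R + r) else 0) = c q * (\<Sum>r<R. if m * R + r < n then it (m * R + r) else 0)"
      unfolding sum_distrib_left by (rule sum.cong) auto
    ultimately show ?thesis by (simp add: distrib_left)
  qed
  finally show ?case .
qed

end

lemma sum4: "(\<Sum>q<(4::nat). f q) = f 0 + f 1 + f 2 + (f 3 :: real)"
  by (simp add: eval_nat_numeral)

context cfg2 begin

lemma sum_r0: "(\<Sum>r<R. if r = 0 then (F::real) else 0) = F"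
  using R1 by (simp add: sum.delta)

lemma M1: "q < 4 \<Longrightarrow> M t (1 + 0 * P) q = (if q = 0 then clamp01 t else 0)"
proof -
  assume q: "q < 4"
  have Z: "Zf zcS zbS 0 0 (\<lambda>k. if k = 0 then t else 0) = t" by (simp add: Zf_def zcS_def zbS_def sum4)
  have "M t (Suc 0) q = (\<Sum>r<R. ccS 0 r q * clamp01 (Zf zcS zbS 0 r (M t 0)))" by simp
  also have "\<dots> = (\<Sum>r<R. if r = 0 then (if q = 0 then clamp01 t else 0) else 0)"
    by (rule sum.cong) (auto simp: ccS_def Z)
  also have "\<dots> = (if q = 0 then clamp01 t else 0)" by (rule sum_r0)
  finally show ?thesis by simp
qed

definition cP :: "nat \<Rightarrow> nat \<Rightarrow> real" where
  "cP p g = (if p = 0 then cA g else if p = 1 then cE g else cL g)"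

lemma z_coarse:
  assumes p: "p < 3" and m: "m < P" and V0: "V 0 = x"
  shows "clamp01 (Zf zcS zbS (1 + p * P + m) r V) = ramp (cP p (m * R + r)) (\<delta>/3) x"
proof -
  have p4: "p < 4" using p by simp
  note lf = l_facts(1-3)[OF p4 m] l_facts(4)[OF p4 m, of r]
  have "Zf zcS zbS (1 + p * P + m) r V = 3 / \<delta> * x + (1 - cP p (m * R + r) / (\<delta>/3))"
    using p m lf V0 by (auto simp: Zf_def zcS_def zbS_def sum4 cP_def)
  also have "\<dots> = (x - cP p (m * R + r)) / (\<delta>/3) + 1"
    using dpos by (simp add: field_simps)
  finally show ?thesis by (simp add: ramp_def)
qed

lemma z_fine:
  assumes m: "m < P" and V0: "V 0 = x" and V1: "V 1 = ax"
  shows "clamp01 (Zf zcS zbS (1 + 3 * P + m) r V) = ramp (cF (m * R + r)) \<delta> (x - real B / KK * ax)"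
proof -
  have p4: "(3::nat) < 4" by simp
  note lf = l_facts(1-3)[OF p4 m] l_facts(4)[OF p4 m, of r]
  have "Zf zcS zbS (1 + 3 * P + m) r V = 1 / \<delta> * x + (- (real B / KK) / \<delta>) * ax + (1 - cF (m * R + r) / \<delta>)"
    using m lf V0 V1 by (auto simp: Zf_def zcS_def zbS_def sum4)
  also have "\<dots> = ((x - real B / KK * ax) - cF (m * R + r)) / \<delta> + 1"
    using dpos by (simp add: field_simps)
  finally show ?thesis by (simp add: ramp_def)
qed

lemma cc_phase:
  assumes p: "p < 4" and m: "m < P"
  shows "ccS (1 + p * P + m) r q =
    (if p = 0 then (if m * R + r < A - 1 \<and> q = 1 then 1 else 0)
     else if p = 1 then (if m * R + r < A - 1 \<and> q = 2 then 1 else 0)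
     else if p = 2 then (if m * R + r < A - 1 \<and> q = 2 then -1 else 0)
     else (if m * R + r < B - 1 \<and> q = 3 then 1 else 0))"
proof -
  define l where "l = 1 + p * P + m"
  have f: "l \<noteq> 0" "l \<le> 4 * P" "ph l = p" "gi l r = m * R + r"
    using l_facts(1-3)[OF p m] l_facts(4)[OF p m, of r] by (simp_all add: l_def)
  show ?thesis unfolding l_def[symmetric] ccS_def using f by simp
qed

lemma sum_ramp_nonneg: "0 \<le> (\<Sum>g<N. ramp (c g) w x)"
  by (intro sum_nonneg) (simp add: ramp_bounds)

theorem machine_psi: "M t (4 * P + 2) 0 = psi (clamp01 t)"
proof -
  define X where "X = clamp01 t"
  have X0: "0 \<le> X" by (simp add: X_def clamp01_bounds)
  have minA: "min (A - 1) (P * R) = A - 1" using AR by simp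
  have minB: "min (B - 1) (P * R) = B - 1" using BR by simp
  have PA: "M t (1 + 0 * P + P) q = (if q = 0 then X else 0) + (if q = 1 then 1 else 0) * (\<Sum>g<min (A - 1) (P * R). ramp (cA g) (\<delta>/3) X)"
    if q: "q < 4" for q
  proof (rule phase[where p = 0 and n = "A - 1" and c = "\<lambda>q. if q = 1 then 1 else 0"
        and it = "\<lambda>g. ramp (cA g) (\<delta>/3) X" and base = "\<lambda>q. if q = 0 then X else 0"])
    show "A - 1 \<le> P * R" by (rule AR)
    fix q :: nat assume "q < 4" then show "M t (1 + 0 * P) q = (if q = 0 then X else 0)"
      unfolding X_def by (rule M1)
  next
    fix m r q :: nat assume "m < P" "r < R" "q < 4"
    then show "ccS (1 + 0 * P + m) r q = (if m * R + r < A - 1 then (if q = 1 then 1 else 0) else 0)"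
      using cc_phase[of 0 m r q] by simp
  next
    fix m r :: nat assume m: "m < P" and "r < R" "m * R + r < A - 1"
      and b: "\<forall>q<4. (if q = 1 then 1 else 0) = (0::real) \<longrightarrow> M t (1 + 0 * P + m) q = (if q = 0 then X else 0)"
    have "M t (1 + 0 * P + m) 0 = X" using b by auto
    then show "clamp01 (Zf zcS zbS (1 + 0 * P + m) r (M t (1 + 0 * P + m))) = ramp (cA (m * R + r)) (\<delta>/3) X"
      using z_coarse[of 0 m "M t (1 + 0 * P + m)" X r] m by (simp add: cP_def)
  next
    fix m q :: nat
    show "0 \<le> (if q = 0 then X else 0) + (if q = 1 then 1 else 0) * (\<Sum>g<min (A - 1) (m * R). ramp (cA g) (\<delta>/3) X)"
      using X0 sum_ramp_nonneg by auto
  qed (use q in auto)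
  have PA': "M t (1 + 1 * P) q = (if q = 0 then X else if q = 1 then aS X else 0)" if q: "q < 4" for q
  proof -
    have idx: "1 + 0 * P + P = 1 + 1 * P" by simp
    show ?thesis using PA[OF q] unfolding minA idx aS_def[symmetric] by (simp del: mst.simps)
  qed
  have PE: "M t (1 + 1 * P + P) q = (if q = 0 then X else if q = 1 then aS X else 0) + (if q = 2 then 1 else 0) * (\<Sum>g<min (A - 1) (P * R). ramp (cE g) (\<delta>/3) X)"
    if q: "q < 4" for q
  proof (rule phase[where p = 1 and n = "A - 1" and c = "\<lambda>q. if q = 2 then 1 else 0"
        and it = "\<lambda>g. ramp (cE g) (\<delta>/3) X" and base = "\<lambda>q. if q = 0 then X else if q = 1 then aS X else 0"])
    show "A - 1 \<le> P * R" by (rule AR)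
    fix q :: nat assume "q < 4" then show "M t (1 + 1 * P) q = (if q = 0 then X else if q = 1 then aS X else 0)" by (rule PA')
  next
    fix m r q :: nat assume "m < P" "r < R" "q < 4"
    then show "ccS (1 + 1 * P + m) r q = (if m * R + r < A - 1 then (if q = 2 then 1 else 0) else 0)"
      using cc_phase[of 1 m r q] by simp
  next
    fix m r :: nat assume m: "m < P" and "r < R" "m * R + r < A - 1"
      and b: "\<forall>q<4. (if q = 2 then 1 else 0) = (0::real) \<longrightarrow> M t (1 + 1 * P + m) q = (if q = 0 then X else if q = 1 then aS X else 0)"
    have "M t (1 + 1 * P + m) 0 = X" using b by auto
    then show "clamp01 (Zf zcS zbS (1 + 1 * P + m) r (M t (1 + 1 * P + m))) = ramp (cE (m * R + r)) (\<delta>/3) X"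
      using z_coarse[of 1 m "M t (1 + 1 * P + m)" X r] m by (simp add: cP_def)
  next
    fix m q :: nat
    show "0 \<le> (if q = 0 then X else if q = 1 then aS X else 0) + (if q = 2 then 1 else 0) * (\<Sum>g<min (A - 1) (m * R). ramp (cE g) (\<delta>/3) X)"
      using X0 sum_ramp_nonneg aS_nonneg by auto
  qed (use q in auto)
  have PE': "M t (1 + 2 * P) q = (if q = 0 then X else if q = 1 then aS X else if q = 2 then eS X else 0)" if q: "q < 4" for q
  proof -
    have idx: "1 + 1 * P + P = 1 + 2 * P" by simp
    show ?thesis using PE[OF q] unfolding minA idx eS_def[symmetric] by (simp del: mst.simps)
  qed
  have PL: "M t (1 + 2 * P + P) q = (if q = 0 then X else if q = 1 then aS X else if q = 2 then eS X else 0) + (if q = 2 then -1 else 0) * (\<Sum>g<min (A - 1) (P * R). ramp (cL g) (\<delta>/3) X)"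
    if q: "q < 4" for q
  proof (rule phase[where p = 2 and n = "A - 1" and c = "\<lambda>q. if q = 2 then -1 else 0"
        and it = "\<lambda>g. ramp (cL g) (\<delta>/3) X" and base = "\<lambda>q. if q = 0 then X else if q = 1 then aS X else if q = 2 then eS X else 0"])
    show "A - 1 \<le> P * R" by (rule AR)
    fix q :: nat assume "q < 4" then show "M t (1 + 2 * P) q = (if q = 0 then X else if q = 1 then aS X else if q = 2 then eS X else 0)" by (rule PE')
  next
    fix m r q :: nat assume "m < P" "r < R" "q < 4"
    then show "ccS (1 + 2 * P + m) r q = (if m * R + r < A - 1 then (if q = 2 then -1 else 0) else 0)"
      using cc_phase[of 2 m r q] by simp
  next
    fix m r :: nat assume m: "m < P" and "r < R" "m * R + r < A - 1"
      and b: "\<forall>q<4. (if q = 2 then -1 else 0) = (0::real) \<longrightarrow> M t (1 + 2 * P + m) q = (if q = 0 then X else if q = 1 then aS X else if q = 2 then eS X else 0)"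
    have "M t (1 + 2 * P + m) 0 = X" using b by auto
    then show "clamp01 (Zf zcS zbS (1 + 2 * P + m) r (M t (1 + 2 * P + m))) = ramp (cL (m * R + r)) (\<delta>/3) X"
      using z_coarse[of 2 m "M t (1 + 2 * P + m)" X r] m by (simp add: cP_def)
  next
    fix m q :: nat
    have "(\<Sum>g<min (A - 1) (m * R). ramp (cL g) (\<delta>/3) X) \<le> (\<Sum>g<min (A - 1) (m * R). ramp (cE g) (\<delta>/3) X)"
      by (intro sum_mono ramp_anti h_pos) (use dpos in \<open>auto simp: cE_def cL_def\<close>)
    also have "\<dots> \<le> eS X" unfolding eS_def
      by (rule sum_mono2) (auto simp: ramp_bounds)
    finally show "0 \<le> (if q = 0 then X else if q = 1 then aS X else if q = 2 then eS X else 0) + (if q = 2 then -1 else 0) * (\<Sum>g<min (A - 1) (m * R). ramp (cL g) (\<delta>/3) X)"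
      using X0 aS_nonneg by auto
  qed (use q in auto)
  have PL': "M t (1 + 3 * P) q = (if q = 0 then X else if q = 1 then aS X else if q = 2 then sS X else 0)" if q: "q < 4" for q
  proof -
    have idx: "1 + 2 * P + P = 1 + 3 * P" by simp
    show ?thesis using PL[OF q] unfolding minA idx lS_def[symmetric] by (simp add: sS_def del: mst.simps)
  qed
  have PF: "M t (1 + 3 * P + P) q = (if q = 0 then X else if q = 1 then aS X else if q = 2 then sS X else 0) + (if q = 3 then 1 else 0) * (\<Sum>g<min (B - 1) (P * R). ramp (cF g) \<delta> (yv X))"
    if q: "q < 4" for q
  proof (rule phase[where p = 3 and n = "B - 1" and c = "\<lambda>q. if q = 3 then 1 else 0"
        and it = "\<lambda>g. ramp (cF g) \<delta> (yv X)" and base = "\<lambda>q. if q = 0 then X else if q = 1 then aS X else if q = 2 then sS X else 0"])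
    show "B - 1 \<le> P * R" by (rule BR)
    fix q :: nat assume "q < 4" then show "M t (1 + 3 * P) q = (if q = 0 then X else if q = 1 then aS X else if q = 2 then sS X else 0)" by (rule PL')
  next
    fix m r q :: nat assume "m < P" "r < R" "q < 4"
    then show "ccS (1 + 3 * P + m) r q = (if m * R + r < B - 1 then (if q = 3 then 1 else 0) else 0)"
      using cc_phase[of 3 m r q] by simp
  next
    fix m r :: nat assume m: "m < P" and "r < R" "m * R + r < B - 1"
      and b: "\<forall>q<4. (if q = 3 then 1 else 0) = (0::real) \<longrightarrow> M t (1 + 3 * P + m) q = (if q = 0 then X else if q = 1 then aS X else if q = 2 then sS X else 0)"
    have "M t (1 + 3 * P + m) 0 = X" "M t (1 + 3 * P + m) 1 = aS X" using b by auto
    then show "clamp01 (Zf zcS zbS (1 + 3 * P + m) r (M t (1 + 3 * P + m))) = ramp (cF (m * R + r)) \<delta> (yv X)"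
      using z_fine[of m "M t (1 + 3 * P + m)" X "aS X" r] m by (simp add: yv_def)
  next
    fix m q :: nat
    show "0 \<le> (if q = 0 then X else if q = 1 then aS X else if q = 2 then sS X else 0) + (if q = 3 then 1 else 0) * (\<Sum>g<min (B - 1) (m * R). ramp (cF g) \<delta> (yv X))"
      using X0 aS_nonneg sS_nonneg sum_ramp_nonneg by auto
  qed (use q in auto)
  define V where "V = M t (4 * P + 1)"
  have PF': "V q = (if q = 0 then X else if q = 1 then aS X else if q = 2 then sS X else fS (yv X))" if q: "q < 4" for q
  proof -
    have idx: "1 + 3 * P + P = 4 * P + 1" by simp
    show ?thesis using PF[OF q] q unfolding minB idx fS_def[symmetric] V_def by (simp del: mst.simps)
  qed
  have lnz: "4 * P + 1 \<noteq> 0" by simp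
  have "M t (4 * P + 2) 0 = M t (Suc (4 * P + 1)) 0" by simp
  also have "\<dots> = max (V 0) 0 + (\<Sum>r<R. ccS (4 * P + 1) r 0 * clamp01 (Zf zcS zbS (4 * P + 1) r V))"
    unfolding V_def by (rule mst_Suc_pos[OF lnz])
  also have "(\<Sum>r<R. ccS (4 * P + 1) r 0 * clamp01 (Zf zcS zbS (4 * P + 1) r V))
      = (\<Sum>r<R. if r = 0 then - 1 / KK * clamp01 (Zf zcS zbS (4 * P + 1) 0 V) else 0)"
    by (rule sum.cong) (auto simp: ccS_def)
  also have "\<dots> = - 1 / KK * clamp01 (Zf zcS zbS (4 * P + 1) 0 V)" by (rule sum_r0)
  also have "Zf zcS zbS (4 * P + 1) 0 V = KK * X - real B * aS X - sS X - fS (yv X)"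
    using PF'[of 0] PF'[of 1] PF'[of 2] PF'[of 3] by (simp add: Zf_def zcS_def zbS_def sum4)
  also have "KK * X - real B * aS X - sS X - fS (yv X) = KK * yv X - fS (yv X) - sS X"
    using KK_pos by (simp add: yv_def right_diff_distrib)
  also have "max (V 0) 0 = X" using PF'[of 0] X0 by simp
  finally show ?thesis by (simp add: psi_def X_def)
qed

end

lemma K_decomp:
  fixes W L d :: nat
  assumes W: "W \<ge> 6" and L: "L \<ge> 2" and d: "d \<ge> 1"
  obtains A B where "K_of W L d = A * B" "1 \<le> A" "1 \<le> B" "A \<le> W * L" "B \<le> W * L"
proof -
  have N1: "1 \<le> W * L" using W L by (simp add: Suc_le_eq)
  have x1: "(1::real) \<le> real (W * L)" using N1 by (metis of_nat_1 of_nat_le_iff)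
  show ?thesis
  proof (cases "d = 1")
    case True
    have "real (W * L) powr (2 / real d) = real (W * L) ^ 2" using True by simp
    also have "\<dots> = real ((W * L) * (W * L))" by (simp add: power2_eq_square)
    finally have e: "real (W * L) powr (2 / real d) = real ((W * L) * (W * L))" .
    have "nat \<lfloor>real ((W * L) * (W * L))\<rfloor> = (W * L) * (W * L)" by (simp only: floor_of_nat nat_int)
    then have "K_of W L d = (W * L) * (W * L)" unfolding K_of_def e .
    then show ?thesis using that N1 by auto
  next
    case False
    then have d2: "2 \<le> real d" using d by simp
    have e0: "0 \<le> 2 / real d" by simp
    have e1: "2 / real d \<le> 1" using d2 by simp
    define y where "y = real (W * L) powr (2 / real d)"
    have y1: "1 \<le> y" unfolding y_def by (rule ge_one_powr_ge_zero[OF x1 e0])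
    have yN: "y \<le> real (W * L)" unfolding y_def
      using powr_mono[OF e1 x1] powr_one[of "real (W * L)"] by simp
    have Kdef: "K_of W L d = nat \<lfloor>y\<rfloor>" by (simp add: K_of_def y_def)
    have "1 \<le> \<lfloor>y\<rfloor>" using y1 by simp
    then have K1: "1 \<le> K_of W L d" unfolding Kdef by linarith
    have "\<lfloor>y\<rfloor> \<le> int (W * L)" using yN by linarith
    then have KN: "K_of W L d \<le> W * L" unfolding Kdef by linarith
    show ?thesis using that[of 1 "K_of W L d"] K1 KN N1 by simp
  qed
qed

lemma budget:
  fixes W L A :: nat
  assumes W: "W \<ge> 6" and L: "L \<ge> 2" and a: "A \<le> W * L"
  shows "A - 1 \<le> (L - 1) * (2 * W - 1)"
proof -
  have WL1: "1 \<le> W * L" using W L by (simp add: Suc_le_eq)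
  have "A - 1 \<le> W * L - 1" using a by simp
  then have "int (A - 1) \<le> int (W * L - 1)" by simp
  also have "int (W * L - 1) = int (W * L) - 1" using WL1 by (simp add: of_nat_diff)
  also have "\<dots> \<le> (int L - 1) * (2 * int W - 1)"
  proof -
    have "0 \<le> (int W - 1) * (int L - 2)" using W L by simp
    then show ?thesis by (simp add: algebra_simps)
  qed
  also have "\<dots> = int ((L - 1) * (2 * W - 1))" using W L by (simp add: of_nat_diff)
  finally show ?thesis by linarith
qed

lemma const_bound:
  fixes K \<delta> :: real and L :: nat
  assumes K: "0 < K" and d: "0 < \<delta>" and Kd: "3 * K * \<delta> \<le> 1" and L: "2 \<le> L"
  shows "2 + 4 / (K * \<delta>) \<le> 2 * real L / (K\<^sup>2 * \<delta>\<^sup>2)"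
proof -
  define u where "u = K * \<delta>"
  have u0: "0 < u" using K d by (simp add: u_def)
  have u3: "u \<le> 1/3" using Kd by (simp add: u_def)
  have "u * u \<le> u * (1/3)" using u0 u3 by (intro mult_left_mono) auto
  then have "2 * u\<^sup>2 + 4 * u \<le> 2 * real L" using u3 L by (simp add: power2_eq_square)
  moreover have "(2 + 4 / u) * u\<^sup>2 = 2 * u\<^sup>2 + 4 * u" using u0 by (simp add: field_simps power2_eq_square)
  ultimately have "(2 + 4 / u) * u\<^sup>2 \<le> 2 * real L" by simp
  then have "2 + 4 / u \<le> 2 * real L / u\<^sup>2" using u0 by (simp add: pos_le_divide_eq)
  then show ?thesis by (simp add: u_def power_mult_distrib)
qed

theorem proposition28:
  fixes W L d :: nat and \<delta> :: real
  assumes "W \<ge> 6" and "L \<ge> 2" and "d \<ge> 1"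
    and "0 < \<delta>" and "\<delta> \<le> 1 / (3 * real (K_of W L d))"
  shows "\<exists>\<phi>. NN_scalar (4 * W + 3) (4 * L) \<phi> \<and>
           (\<forall>x. \<phi> x \<in> {0..1}) \<and>
           (2 * real L / ((real (K_of W L d))\<^sup>2 * \<delta>\<^sup>2))-lipschitz_on UNIV \<phi> \<and>
           (\<forall>k < K_of W L d. \<forall>x.
              real k / real (K_of W L d) \<le> x \<and>
              x \<le> (real k + 1) / real (K_of W L d)
                    - \<delta> * (if k < K_of W L d - 1 then 1 else 0)
              \<longrightarrow> \<phi> x = real k / real (K_of W L d))"
proof -
  obtain A B where KAB: "K_of W L d = A * B" and A1: "1 \<le> A" and B1: "1 \<le> B"
    and AN: "A \<le> W * L" and BN: "B \<le> W * L"
    using K_decomp[OF assms(1-3)] by blast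
  define R where "R = 2 * W - 1"
  define P where "P = L - 1"
  have Kpos: "0 < real (K_of W L d)" using KAB A1 B1 by simp
  have dK: "3 * real (A * B) * \<delta> \<le> 1"
    using assms(5) Kpos unfolding KAB by (simp add: field_simps)
  interpret c: cfg2 A B \<delta> R P
  proof
    show "1 \<le> A" "1 \<le> B" "0 < \<delta>" by fact+
    show "3 * real (A * B) * \<delta> \<le> 1" by (rule dK)
    show "1 \<le> R" using assms(1) by (simp add: R_def)
    show "1 \<le> P" using assms(2) by (simp add: P_def)
    show "A - 1 \<le> P * R" unfolding P_def R_def by (rule budget[OF assms(1,2) AN])
    show "B - 1 \<le> P * R" unfolding P_def R_def by (rule budget[OF assms(1,2) BN])
  qed
  have KK: "c.KK = real (K_of W L d)" by (simp add: c.KK_def KAB)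
  define \<phi> where "\<phi> t = c.psi (clamp01 t)" for t
  have NN: "NN_scalar (4 * W + 3) (4 * L) (\<lambda>t. mst R c.zcS c.zbS c.ccS t (4 * P + 2) 0)"
    by (rule machine_NN) (use assms(1,2) in \<open>auto simp: P_def R_def\<close>)
  have "(\<lambda>t. mst R c.zcS c.zbS c.ccS t (4 * P + 2) 0) = \<phi>"
    by (rule ext) (simp only: c.machine_psi \<phi>_def)
  with NN have NN': "NN_scalar (4 * W + 3) (4 * L) \<phi>" by simp
  have range: "\<forall>x. \<phi> x \<in> {0..1}"
    using c.psi_range clamp01_bounds by (auto simp: \<phi>_def)
  have lip0: "(c.Cst * 1)-lipschitz_on UNIV \<phi>"
    unfolding \<phi>_def
    by (rule lipschitz_on_compose2[OF clamp01_lip lipschitz_on_subset[OF c.psi_lip]])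
       (auto simp: clamp01_bounds)
  have "c.Cst \<le> 2 * real L / ((real (K_of W L d))\<^sup>2 * \<delta>\<^sup>2)"
    unfolding c.Cst_def KK[symmetric]
    by (rule const_bound[OF c.KK_pos assms(4) _ assms(2)]) (use dK in \<open>simp add: c.KK_def\<close>)
  then have lip: "(2 * real L / ((real (K_of W L d))\<^sup>2 * \<delta>\<^sup>2))-lipschitz_on UNIV \<phi>"
    using lipschitz_on_mono[OF lip0 subset_refl] by simp
  have plat: "\<forall>k < K_of W L d. \<forall>x.
              real k / real (K_of W L d) \<le> x \<and>
              x \<le> (real k + 1) / real (K_of W L d)
                    - \<delta> * (if k < K_of W L d - 1 then 1 else 0)
              \<longrightarrow> \<phi> x = real k / real (K_of W L d)"
  proof (intro allI impI)
    fix k x assume k: "k < K_of W L d"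
      and x: "real k / real (K_of W L d) \<le> x \<and>
              x \<le> (real k + 1) / real (K_of W L d) - \<delta> * (if k < K_of W L d - 1 then 1 else 0)"
    have ind: "0 \<le> \<delta> * (if k < K_of W L d - 1 then 1 else 0)" using assms(4) by simp
    have x0: "0 \<le> x" using x Kpos by (meson divide_nonneg_pos of_nat_0_le_iff order_trans)
    have "real k + 1 \<le> real (K_of W L d)" using k by simp
    then have "(real k + 1) / real (K_of W L d) \<le> 1" using Kpos by simp
    then have x1: "x \<le> 1" using x ind by linarith
    have cx: "clamp01 x = x" using x0 x1 by (rule clamp01_id)
    have "c.psi x = real k / c.KK"
      by (rule c.plateau) (use k x in \<open>simp_all add: KK KAB\<close>)
    then show "\<phi> x = real k / real (K_of W L d)" by (simp add: \<phi>_def cx KK)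
  qed
  show ?thesis using NN' range lip plat by blast
qed

end
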